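(* Let $n\ge m$ and $\ell,N,p,q,K\in\mathbb{N}$. Let $\mathcal{S}=\{x\in\mathbb{R}^n : Fx\le\mathbf{1}_p\}$ be a C-polytope with $F\in\mathbb{R}^{p\times n}$ of full column rank and vertices $x_1,\dots,x_N$, and let $\mathscr{U}=\{u\in\mathbb{R}^m: Hu\le\mathbf{1}_q\}$ be a C-polytope with $H\in\mathbb{R}^{q\times m}$ of full column rank. Let $\delta^{(1)},\dots,\delta^{(K)}\in\mathbb{R}^\ell$ be given, with associated matrices $A(\delta^{(j)})\in\mathbb{R}^{n\times n}$, $B(\delta^{(j)})\in\mathbb{R}^{n\times m}$. For each $j$ set $G^{(j)}=\begin{bmatrix}H\\ FB(\delta^{(j)})\end{bmatrix}$ and $l^{(i,j)}=\begin{bmatrix}\mathbf{1}_q\\ \mathbf{1}_p-FA(\delta^{(j)})x_i\end{bmatrix}$. Let $$\mathcal{L}_{\delta_K}=\{(C_1,\dots,C_N,d_1,\dots,d_N): C_i\in\mathbb{R}^{m\times\ell},\ d_i\in\mathbb{R}^m,\ C_i\delta^{(j)}+d_i\in\mathscr{U},\ A(\delta^{(j)})x_i+B(\delta^{(j)})(C_i\delta^{(j)}+d_i)\in\mathcal{S}\ \forall i,\ \forall j\}.$$ If $\mathcal{L}_{\delta_K}\neq\emptyset$, then for every $i\in\{1,\dots,N\}$ and $j\in\{1,\dots,K\}$ there exist index sets $\mathcal{Q}\subset\{1,\dots,q\}$, $\mathcal{P}\subset\{1,\dots,p\}$ such that the submatrix $G^{(j)}_{\mathcal{Q}\cup\mathcal{P}}\in\mathbb{R}^{m\times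 m}$ (rows $\mathcal{Q}$ of $H$ and rows $\mathcal{P}$ of $FB(\delta^{(j)})$) is invertible and $$(H)_k\,(G^{(j)}_{\mathcal{Q}\cup\mathcal{P}})^{-1}\,l^{(i,j)}_{\mathcal{Q}\cup\mathcal{P}}\le 1\quad\forall k\in\{1,\dots,q\}\setminus\mathcal{Q},$$ $$(FB(\delta^{(j)}))_k\,(G^{(j)}_{\mathcal{Q}\cup\mathcal{P}})^{-1}\,l^{(i,j)}_{\mathcal{Q}\cup\mathcal{P}}\le 1-(FA(\delta^{(j)})x_i)_k\quad\forall k\in\{1,\dots,p\}\setminus\mathcal{P}.$$
   Context: A C-polytope is a convex bounded polyhedron containing the origin in its interior. $(P)_k$ denotes the $k$-th row of a matrix $P$; for an index set $\mathcal{I}$, $P_{\mathcal{I}}$ (resp. $y_{\mathcal{I}}$) denotes the submatrix (subvector) of rows (entries) indexed by $\mathcal{I}$. $\mathbf{1}_p$ is the all-ones vector in $\mathbb{R}^p$. *)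

theory Defs
  imports "HOL-Analysis.Analysis"
begin

definition c_polytope :: "('a::euclidean_space) set \<Rightarrow> bool" where
  "c_polytope S \<longleftrightarrow> polytope S \<and> 0 \<in> interior S"

definition ones :: "real^'k" where
  "ones = (\<chi> k. 1)"

definition Gmat :: "real^'m^'q \<Rightarrow> real^'n^'p \<Rightarrow> real^'m^'n \<Rightarrow> real^'m^('q + 'p)" where
  "Gmat H F B = (\<chi> r. case r of Inl k \<Rightarrow> H $ k | Inr k \<Rightarrow> (F ** B) $ k)"

definition lvec :: "real^'n^'p \<Rightarrow> real^'n^'n \<Rightarrow> real^'n \<Rightarrow> real^('q::finite + 'p)" where
  "lvec F A x = (\<chi> r. case r of Inl k \<Rightarrow> 1 | Inr k \<Rightarrow> 1 - (F ** A *v x) $ k)"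

text \<open>Row-submatrix / subvector selected via an enumeration sigma of the chosen rows.\<close>
definition submat :: "real^'c^'r \<Rightarrow> ('s \<Rightarrow> 'r) \<Rightarrow> real^'c^'s" where
  "submat G \<sigma> = (\<chi> s. G $ \<sigma> s)"

definition subvec :: "real^'r \<Rightarrow> ('s \<Rightarrow> 'r) \<Rightarrow> real^'s" where
  "subvec v \<sigma> = (\<chi> s. v $ \<sigma> s)"

end

theory Submission
  imports Defs
begin

lemma vertex_exists:
  fixes g :: "'r::finite \<Rightarrow> real^'m" and b :: "'r \<Rightarrow> real"
  assumes feas0: "\<forall>r. g r \<bullet> u0 \<le> b r"
    and nondeg: "\<And>w. w \<noteq> 0 \<Longrightarrow> \<exists>r. g r \<bullet> w \<noteq> 0"
  shows "\<exists>u. (\<forall>r. g r \<bullet> u \<le> b r) \<and> dim (g ` {r. g r \<bullet> u = b r}) = CARD('m)"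
proof -
  define D where "D = (\<lambda>u. dim (g ` {r. g r \<bullet> u = b r}))"
  define DS where "DS = D ` {u. \<forall>r. g r \<bullet> u \<le> b r}"
  have DSsub: "DS \<subseteq> {..CARD('m)}" unfolding DS_def D_def
    using dim_subset_UNIV_cart by fastforce
  hence finDS: "finite DS" using finite_subset by blast
  have "DS \<noteq> {}" unfolding DS_def using feas0 by blast
  hence "Max DS \<in> DS" using finDS Max_in by blast
  then obtain u where feas: "\<forall>r. g r \<bullet> u \<le> b r" and uD: "D u = Max DS"
    unfolding DS_def by auto
  have maxD: "D v \<le> D u" if "\<forall>r. g r \<bullet> v \<le> b r" for v
    using that uD finDS unfolding DS_def by (simp add: Max_ge)
  have "D u = CARD('m)"
  proof (rule ccontr)
    assume "D u \<noteq> CARD('m)"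
    with dim_subset_UNIV_cart[of "g ` {r. g r \<bullet> u = b r}"]
    have "dim (g ` {r. g r \<bullet> u = b r}) < DIM(real^'m)" unfolding D_def by simp
    then obtain w where w0: "w \<noteq> 0" and wo: "\<And>y. y \<in> span (g ` {r. g r \<bullet> u = b r}) \<Longrightarrow> orthogonal w y"
      using orthogonal_to_subspace_exists by blast
    obtain r0 where r0: "g r0 \<bullet> w \<noteq> 0" using nondeg w0 by blast
    define w' where "w' = (if g r0 \<bullet> w > 0 then w else - w)"
    have r0': "g r0 \<bullet> w' > 0" using r0 unfolding w'_def by auto
    have wo': "g r \<bullet> w' = 0" if "g r \<bullet> u = b r" for r
    proof -
      have "g r \<in> span (g ` {r. g r \<bullet> u = b r})" using that by (intro span_base) auto
      hence "w \<bullet> g r = 0" using wo orthogonal_def by blast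
      thus ?thesis unfolding w'_def by (auto simp: inner_commute)
    qed
    have spo: "y \<bullet> w' = 0" if "y \<in> span (g ` {r. g r \<bullet> u = b r})" for y
      using wo[OF that] unfolding w'_def orthogonal_def by (auto simp: inner_commute)
    define T where "T = {r. g r \<bullet> w' > 0}"
    define f where "f = (\<lambda>r. (b r - g r \<bullet> u) / (g r \<bullet> w'))"
    have "T \<noteq> {}" using r0' T_def by blast
    hence "Min (f ` T) \<in> f ` T" by (intro Min_in) auto
    then obtain rs where rsT: "rs \<in> T" and trs: "Min (f ` T) = f rs" by auto
    define t where "t = f rs"
    have tle: "t \<le> f r" if "r \<in> T" for r unfolding t_def using trs that by (metis Min_le finite finite_imageI image_eqI)
    have t0: "t \<ge> 0" unfolding t_def f_def using rsT feas[rule_format, of rs] T_def by simp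
    define u' where "u' = u + t *\<^sub>R w'"
    have feas': "\<forall>r. g r \<bullet> u' \<le> b r"
    proof
      fix r
      have e: "g r \<bullet> u' = g r \<bullet> u + t * (g r \<bullet> w')" unfolding u'_def by (simp add: inner_add_right)
      show "g r \<bullet> u' \<le> b r"
      proof (cases "r \<in> T")
        case True
        hence p: "g r \<bullet> w' > 0" unfolding T_def by simp
        have "t * (g r \<bullet> w') \<le> f r * (g r \<bullet> w')" using tle[OF True] p by (simp add: mult_right_mono)
        also have "\<dots> = b r - g r \<bullet> u" unfolding f_def using p by simp
        finally show ?thesis using e by simp
      next
        case False
        hence "g r \<bullet> w' \<le> 0" unfolding T_def by simp
        hence "t * (g r \<bullet> w') \<le> 0" using t0 by (simp add: mult_nonneg_nonpos)
        thus ?thesis using e feas by (smt (verit))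
      qed
    qed
    have sub: "insert (g rs) (g ` {r. g r \<bullet> u = b r}) \<subseteq> g ` {r. g r \<bullet> u' = b r}"
    proof -
      have "g r \<bullet> u' = b r" if "g r \<bullet> u = b r" for r
        using wo'[OF that] that unfolding u'_def by (simp add: inner_add_right)
      moreover have "g rs \<bullet> u' = b rs"
      proof -
        have p: "g rs \<bullet> w' > 0" using rsT T_def by simp
        have "g rs \<bullet> u' = g rs \<bullet> u + f rs * (g rs \<bullet> w')" unfolding u'_def t_def by (simp add: inner_add_right)
        thus ?thesis unfolding f_def using p by simp
      qed
      ultimately show ?thesis by blast
    qed
    have notin: "g rs \<notin> span (g ` {r. g r \<bullet> u = b r})"
      using spo rsT T_def by fastforce
    have "D u + 1 = dim (insert (g rs) (g ` {r. g r \<bullet> u = b r}))"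
      using notin unfolding D_def by (simp add: dim_insert)
    also have "\<dots> \<le> D u'" unfolding D_def using sub by (rule dim_subset)
    also have "\<dots> \<le> D u" using maxD feas' by blast
    finally show False by simp
  qed
  thus ?thesis using feas unfolding D_def by blast
qed

theorem proposition1:
  fixes F :: "real^'n^'p" and H :: "real^'m^'q"
    and A :: "real^'l \<Rightarrow> real^'n^'n" and B :: "real^'l \<Rightarrow> real^'m^'n"
    and x :: "nat \<Rightarrow> real^'n" and \<delta> :: "nat \<Rightarrow> real^'l"
    and N K :: nat
  assumes nm: "CARD('m) \<le> CARD('n)"
    and S_cpoly: "c_polytope {y :: real^'n. F *v y \<le> ones}"
    and F_rank: "rank F = CARD('n)"
    and vertices: "{v. v extreme_point_of {y :: real^'n. F *v y \<le> ones}} = x ` {1..N}"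
    and x_inj: "inj_on x {1..N}"
    and U_cpoly: "c_polytope {u :: real^'m. H *v u \<le> ones}"
    and H_rank: "rank H = CARD('m)"
    and L_nonempty: "\<exists>C :: nat \<Rightarrow> real^'l^'m. \<exists>d :: nat \<Rightarrow> real^'m.
        \<forall>i\<in>{1..N}. \<forall>j\<in>{1..K}.
          H *v (C i *v \<delta> j + d i) \<le> ones \<and>
          F *v (A (\<delta> j) *v x i + B (\<delta> j) *v (C i *v \<delta> j + d i)) \<le> ones"
  shows "\<forall>i\<in>{1..N}. \<forall>j\<in>{1..K}. \<exists>(Q :: 'q set) (P :: 'p set) (\<sigma> :: 'm \<Rightarrow> 'q + 'p).
           bij_betw \<sigma> UNIV (Inl ` Q \<union> Inr ` P) \<and>
           invertible (submat (Gmat H F (B (\<delta> j))) \<sigma>) \<and>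
           (let u = matrix_inv (submat (Gmat H F (B (\<delta> j))) \<sigma>)
                      *v subvec (lvec F (A (\<delta> j)) (x i)) \<sigma>
            in (\<forall>k. k \<notin> Q \<longrightarrow> (H *v u) $ k \<le> 1) \<and>
               (\<forall>k. k \<notin> P \<longrightarrow>
                   (F ** B (\<delta> j) *v u) $ k \<le> 1 - (F ** A (\<delta> j) *v x i) $ k))"
proof (intro ballI)
  fix i j
  assume ii: "i \<in> {1..N}" and jj: "j \<in> {1..K}"
  define Bj where "Bj = B (\<delta> j)"
  define Aj where "Aj = A (\<delta> j)"
  define G where "G = Gmat H F Bj"
  define b where "b = (lvec F Aj (x i) :: real^('q + 'p))"
  define g where "g = (\<lambda>r. G $ r)"
  have gl: "g (Inl k) = H $ k" for k unfolding g_def G_def Gmat_def by simp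
  have gr: "g (Inr k) = (F ** Bj) $ k" for k unfolding g_def G_def Gmat_def by simp
  have bl: "b $ Inl k = 1" for k unfolding b_def lvec_def by simp
  have br: "b $ Inr k = 1 - (F ** Aj *v x i) $ k" for k unfolding b_def lvec_def by simp
  have feasiff: "(\<forall>r. g r \<bullet> v \<le> b $ r) \<longleftrightarrow> (H *v v \<le> ones \<and> (\<forall>k. (F ** Bj *v v) $ k \<le> 1 - (F ** Aj *v x i) $ k))" for v
  proof -
    have "(\<forall>r. g r \<bullet> v \<le> b $ r) \<longleftrightarrow> (\<forall>k. g (Inl k) \<bullet> v \<le> b $ Inl k) \<and> (\<forall>k. g (Inr k) \<bullet> v \<le> b $ Inr k)"
      apply (rule iffI)
       apply simp
      apply (intro allI)
      subgoal for r by (cases r) auto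
      done
    also have "\<dots> \<longleftrightarrow> (H *v v \<le> ones \<and> (\<forall>k. (F ** Bj *v v) $ k \<le> 1 - (F ** Aj *v x i) $ k))"
      by (simp add: gl gr bl br less_eq_vec_def ones_def matrix_vector_mul_component)
    finally show ?thesis .
  qed
  obtain C :: "nat \<Rightarrow> real^'l^'m" and d :: "nat \<Rightarrow> real^'m" where Cd:
    "\<forall>i\<in>{1..N}. \<forall>j\<in>{1..K}.
          H *v (C i *v \<delta> j + d i) \<le> ones \<and>
          F *v (A (\<delta> j) *v x i + B (\<delta> j) *v (C i *v \<delta> j + d i)) \<le> ones"
    using L_nonempty by blast
  define u0 where "u0 = C i *v \<delta> j + d i"
  have f1: "H *v u0 \<le> ones" and f2: "F *v (Aj *v x i + Bj *v u0) \<le> ones"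
    using Cd ii jj unfolding u0_def Aj_def Bj_def by auto
  have "(F ** Bj *v u0) $ k \<le> 1 - (F ** Aj *v x i) $ k" for k
  proof -
    have "(F *v (Aj *v x i + Bj *v u0)) $ k \<le> 1" using f2 by (simp add: less_eq_vec_def ones_def)
    thus ?thesis by (simp add: matrix_vector_mul_assoc[symmetric] matrix_vector_right_distrib)
  qed
  hence feas0: "\<forall>r. g r \<bullet> u0 \<le> b $ r" using f1 feasiff by blast
  have injH: "inj ((*v) H)" using H_rank full_rank_injective by blast
  have nondeg: "\<exists>r. g r \<bullet> w \<noteq> 0" if "w \<noteq> 0" for w
  proof -
    have "H *v w \<noteq> 0" using injH that by (metis injD matrix_vector_mult_0_right)
    then obtain k where "(H *v w) $ k \<noteq> 0" by (metis vec_eq_iff zero_index)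
    thus ?thesis by (metis gl matrix_vector_mul_component)
  qed
  obtain u where feas: "\<forall>r. g r \<bullet> u \<le> b $ r" and dimu: "dim (g ` {r. g r \<bullet> u = b $ r}) = CARD('m)"
    using vertex_exists[of g u0 "\<lambda>r. b $ r", OF feas0 nondeg] by blast
  obtain BB where BBs: "BB \<subseteq> g ` {r. g r \<bullet> u = b $ r}" and BBi: "independent BB"
    and "g ` {r. g r \<bullet> u = b $ r} \<subseteq> span BB"
    and BBc0: "card BB = dim (g ` {r. g r \<bullet> u = b $ r})"
    by (rule basis_exists)
  have BBc: "card BB = CARD('m)" using BBc0 dimu by simp
  obtain R where Rs: "R \<subseteq> {r. g r \<bullet> u = b $ r}" and Ri: "inj_on g R" and BBR: "BB = g ` R"
    using iffD1[OF subset_image_inj BBs] by blast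
  have cR: "card R = card (UNIV :: 'm set)" using BBc BBR Ri card_image by fastforce
  have "\<exists>\<sigma> :: 'm \<Rightarrow> 'q + 'p. bij_betw \<sigma> UNIV R"
    using bij_betw_iff_card[of "UNIV :: 'm set" R] cR by simp
  then obtain \<sigma> :: "'m \<Rightarrow> 'q + 'p" where sig: "bij_betw \<sigma> UNIV R" by blast
  define Q where "Q = {k. Inl k \<in> R}"
  define P where "P = {k. Inr k \<in> R}"
  have QP: "Inl ` Q \<union> Inr ` P = R"
  proof (rule set_eqI)
    fix r :: "'q + 'p"
    show "r \<in> Inl ` Q \<union> Inr ` P \<longleftrightarrow> r \<in> R" by (cases r) (auto simp: Q_def P_def)
  qed
  define M where "M = submat G \<sigma>"
  have Mrow: "M $ s = g (\<sigma> s)" for s unfolding M_def submat_def g_def by simp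
  have rowsM: "rows M = BB"
  proof -
    have "rows M = g ` (\<sigma> ` UNIV)" unfolding rows_def
      by (auto simp: row_def Mrow vec_eq_iff)
    thus ?thesis using sig BBR bij_betw_imp_surj_on by metis
  qed
  have "rank M = dim BB" using rowsM by (simp add: row_rank_def)
  also have "\<dots> = card BB" using BBi by (rule dim_eq_card_independent)
  finally have "rank M = CARD('m)" using BBc by simp
  hence "inj ((*v) M)" using full_rank_injective by blast
  hence invM: "invertible M" using matrix_left_invertible_injective invertible_left_inverse by blast
  have Mu: "M *v u = subvec b \<sigma>"
  proof -
    have "g (\<sigma> s) \<bullet> u = b $ \<sigma> s" for s
    proof -
      have "\<sigma> s \<in> R" using sig unfolding bij_betw_def by blast
      thus ?thesis using Rs by blast
    qed
    thus ?thesis unfolding subvec_def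
      by (simp add: vec_eq_iff matrix_vector_mul_component Mrow)
  qed
  have "matrix_inv M ** M = mat 1" using invM unfolding invertible_def matrix_inv_def
    by (rule someI2_ex) auto
  hence uval: "matrix_inv M *v subvec b \<sigma> = u"
    by (metis Mu matrix_vector_mul_assoc matrix_vector_mul_lid)
  have c1: "(H *v u) $ k \<le> 1" for k using feas feasiff by (simp add: less_eq_vec_def ones_def)
  have c2: "(F ** Bj *v u) $ k \<le> 1 - (F ** Aj *v x i) $ k" for k using feas feasiff by blast
  show "\<exists>(Q :: 'q set) (P :: 'p set) (\<sigma> :: 'm \<Rightarrow> 'q + 'p).
           bij_betw \<sigma> UNIV (Inl ` Q \<union> Inr ` P) \<and>
           invertible (submat (Gmat H F (B (\<delta> j))) \<sigma>) \<and>
           (let u = matrix_inv (submat (Gmat H F (B (\<delta> j))) \<sigma>)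
                      *v subvec (lvec F (A (\<delta> j)) (x i)) \<sigma>
            in (\<forall>k. k \<notin> Q \<longrightarrow> (H *v u) $ k \<le> 1) \<and>
               (\<forall>k. k \<notin> P \<longrightarrow>
                   (F ** B (\<delta> j) *v u) $ k \<le> 1 - (F ** A (\<delta> j) *v x i) $ k))"
    apply (rule exI[of _ Q], rule exI[of _ P], rule exI[of _ \<sigma>])
    using sig QP invM uval c1 c2 unfolding M_def G_def Bj_def Aj_def b_def Let_def by auto
qed

end
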